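(* Let $A_1,\dots,A_m\in\mathbb R^{n\times n}$ and $z\in\mathbb R^n$. For any integer $l\ge1$ let $h^l:\mathbb R^{n\circ l}\to\mathbb R$, \[ h^l(\mathbf w)=\sum_{a_1,\dots,a_l\in[m]}\Big(\sum_{i,j\in[n]^l}\Big(\prod_{k=1}^l (A_{a_k})_{i_kj_k}\Big)\big(w_{i_1\dots i_l}w_{j_1\dots j_l}-z_{i_1}\cdots z_{i_l}z_{j_1}\cdots z_{j_l}\big)\Big)^2 . \] Then for every $l\ge1$, $z^{\otimes l}$ is a second-order point of $h^l$, i.e. $\nabla h^l(z^{\otimes l})=0$ and $\nabla^2h^l(z^{\otimes l})\succeq0$; no RSC or RSS assumption is needed.
   Context: $\mathbb R^{n\circ l}$ denotes $l$-way tensors of size $n\times\cdots\times n$; $z^{\otimes l}$ is the tensor with entries $z_{i_1}\cdots z_{i_l}$. $z$ is the ground truth of the rank-1 matrix sensing problem $\min_{x\in\mathbb R^n}\sum_a\langle A_a,xx^\top-zz^\top\rangle^2$, and $h^l$ is its lifted version. *)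

theory Defs
  imports "HOL-Analysis.Analysis"
begin

text \<open>Multi-indices of length l with entries in [n] (0-based): the coordinates of R^{n o l}.
  An l-way tensor is a function from index lists to reals; only its values on
  these multi-indices matter.\<close>
definition multi_idx :: "nat \<Rightarrow> nat \<Rightarrow> nat list set" where
  "multi_idx n l = {is. length is = l \<and> set is \<subseteq> {..<n}}"

definition tensor_power :: "(nat \<Rightarrow> real) \<Rightarrow> nat list \<Rightarrow> real" where
  "tensor_power z is = (\<Prod>k<length is. z (is ! k))"

text \<open>Lifted objective h^l; A a i j is the (i,j) entry of A_a (a < m, i,j < n).\<close>
definition lifted_obj ::
  "nat \<Rightarrow> nat \<Rightarrow> (nat \<Rightarrow> nat \<Rightarrow> nat \<Rightarrow> real) \<Rightarrow> (nat \<Rightarrow> real) \<Rightarrow> nat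
     \<Rightarrow> (nat list \<Rightarrow> real) \<Rightarrow> real" where
  "lifted_obj n m A z l w =
     (\<Sum>a\<in>multi_idx m l.
        (\<Sum>i\<in>multi_idx n l. \<Sum>j\<in>multi_idx n l.
           (\<Prod>k<l. A (a ! k) (i ! k) (j ! k)) *
           (w i * w j - tensor_power z i * tensor_power z j))\<^sup>2)"

definition partial_deriv :: "(('i \<Rightarrow> real) \<Rightarrow> real) \<Rightarrow> ('i \<Rightarrow> real) \<Rightarrow> 'i \<Rightarrow> real" where
  "partial_deriv f w p = deriv (\<lambda>t. f (w(p := w p + t))) 0"

definition hessian_entry :: "(('i \<Rightarrow> real) \<Rightarrow> real) \<Rightarrow> ('i \<Rightarrow> real) \<Rightarrow> 'i \<Rightarrow> 'i \<Rightarrow> real" where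
  "hessian_entry f w p q = deriv (\<lambda>s. partial_deriv f (w(q := w q + s)) p) 0"

end

theory Submission
  imports Defs
begin

definition gfun :: "(nat list \<Rightarrow> nat list \<Rightarrow> real) \<Rightarrow> nat list set \<Rightarrow> (nat list \<Rightarrow> nat list \<Rightarrow> real)
   \<Rightarrow> (nat list \<Rightarrow> real) \<Rightarrow> real" where
  "gfun c I d w = (\<Sum>i\<in>I. \<Sum>j\<in>I. c i j * (w i * w j - d i j))"

definition dl :: "nat list \<Rightarrow> nat list \<Rightarrow> real" where
  "dl i p = (if i = p then 1 else 0)"

definition Dfun :: "(nat list \<Rightarrow> nat list \<Rightarrow> real) \<Rightarrow> nat list set \<Rightarrow> nat list
   \<Rightarrow> (nat list \<Rightarrow> real) \<Rightarrow> real" where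
  "Dfun c I p w = (\<Sum>i\<in>I. \<Sum>j\<in>I. c i j * (dl i p * w j + w i * dl j p))"

lemma upd_eq: "(w(p := w p + t)) i = w i + t * dl i p"
  by (simp add: dl_def)

lemma gfun_deriv:
  "((\<lambda>t. gfun c I d (w(p := w p + t))) has_real_derivative Dfun c I p w) (at 0)"
proof -
  have "((\<lambda>t. \<Sum>i\<in>I. \<Sum>j\<in>I. c i j * ((w i + t * dl i p) * (w j + t * dl j p) - d i j))
        has_real_derivative Dfun c I p w) (at 0)"
    unfolding Dfun_def
    apply (rule DERIV_sum)+
    apply (rule derivative_eq_intros refl)+
    apply (simp add: algebra_simps)
    done
  then show ?thesis unfolding gfun_def upd_eq .
qed

lemma Dfun_deriv:
  "((\<lambda>s. Dfun c I p (w(q := w q + s))) has_real_derivative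
      (\<Sum>i\<in>I. \<Sum>j\<in>I. c i j * (dl i p * dl j q + dl i q * dl j p))) (at 0)"
proof -
  have "((\<lambda>s. \<Sum>i\<in>I. \<Sum>j\<in>I. c i j * (dl i p * (w j + s * dl j q) + (w i + s * dl i q) * dl j p))
        has_real_derivative (\<Sum>i\<in>I. \<Sum>j\<in>I. c i j * (dl i p * dl j q + dl i q * dl j p))) (at 0)"
    apply (rule DERIV_sum)+
    apply (rule derivative_eq_intros refl)+
    apply (simp add: algebra_simps)
    done
  then show ?thesis unfolding Dfun_def upd_eq .
qed

lemma pd_formula:
  "partial_deriv (\<lambda>w. \<Sum>a\<in>S. (gfun (c a) I d w)\<^sup>2) w p
     = (\<Sum>a\<in>S. 2 * gfun (c a) I d w * Dfun (c a) I p w)"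
proof -
  have "((\<lambda>t. \<Sum>a\<in>S. (gfun (c a) I d (w(p := w p + t)))\<^sup>2) has_real_derivative
          (\<Sum>a\<in>S. 2 * gfun (c a) I d w * Dfun (c a) I p w)) (at 0)"
  proof (rule DERIV_sum)
    fix a assume "a \<in> S"
    have "((\<lambda>t. gfun (c a) I d (w(p := w p + t)) * gfun (c a) I d (w(p := w p + t)))
        has_real_derivative (gfun (c a) I d (w(p := w p + 0)) * Dfun (c a) I p w
            + Dfun (c a) I p w * gfun (c a) I d (w(p := w p + 0)))) (at 0)"
      by (rule DERIV_mult' gfun_deriv)+
    then show "((\<lambda>t. (gfun (c a) I d (w(p := w p + t)))\<^sup>2) has_real_derivative
          2 * gfun (c a) I d w * Dfun (c a) I p w) (at 0)"
      by (simp add: power2_eq_square algebra_simps)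
  qed
  then show ?thesis unfolding partial_deriv_def by (rule DERIV_imp_deriv)
qed

lemma gfun_zero: "gfun c I (\<lambda>i j. T i * T j) T = 0"
  by (simp add: gfun_def)

lemma hess_formula:
  "hessian_entry (\<lambda>w. \<Sum>a\<in>S. (gfun (c a) I (\<lambda>i j. T i * T j) w)\<^sup>2) T p q
     = (\<Sum>a\<in>S. 2 * Dfun (c a) I q T * Dfun (c a) I p T)"
proof -
  let ?d = "\<lambda>i j. T i * T j"
  have "((\<lambda>s. \<Sum>a\<in>S. 2 * gfun (c a) I ?d (T(q := T q + s)) * Dfun (c a) I p (T(q := T q + s)))
        has_real_derivative (\<Sum>a\<in>S. 2 * Dfun (c a) I q T * Dfun (c a) I p T)) (at 0)"
  proof (rule DERIV_sum)
    fix a assume "a \<in> S"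
    obtain E where E: "((\<lambda>s. Dfun (c a) I p (T(q := T q + s))) has_real_derivative E) (at 0)"
      using Dfun_deriv by blast
    have "((\<lambda>s. 2 * (gfun (c a) I ?d (T(q := T q + s)) * Dfun (c a) I p (T(q := T q + s))))
        has_real_derivative 2 * (gfun (c a) I ?d (T(q := T q + 0)) * E
            + Dfun (c a) I q T * Dfun (c a) I p (T(q := T q + 0)))) (at 0)"
      by (intro DERIV_cmult DERIV_mult' gfun_deriv E)
    then show "((\<lambda>s. 2 * gfun (c a) I ?d (T(q := T q + s)) * Dfun (c a) I p (T(q := T q + s)))
        has_real_derivative 2 * Dfun (c a) I q T * Dfun (c a) I p T) (at 0)"
      by (simp add: gfun_zero mult.assoc)
  qed
  then show ?thesis unfolding hessian_entry_def pd_formula by (rule DERIV_imp_deriv)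
qed

lemma quad:
  fixes v' :: "'b \<Rightarrow> real" and D :: "'b \<Rightarrow> 'c \<Rightarrow> real" and I :: "'b set" and S :: "'c set"
  shows "(\<Sum>p\<in>I. \<Sum>q\<in>I. v' p * v' q * (\<Sum>a\<in>S. 2 * D q a * D p a)) \<ge> 0"
proof -
  have "(\<Sum>p\<in>I. \<Sum>q\<in>I. v' p * v' q * (\<Sum>a\<in>S. 2 * D q a * D p a))
      = (\<Sum>p\<in>I. \<Sum>q\<in>I. \<Sum>a\<in>S. 2 * ((v' p * D p a) * (v' q * D q a)))"
    by (simp add: sum_distrib_left mult_ac)
  also have "\<dots> = (\<Sum>p\<in>I. \<Sum>a\<in>S. \<Sum>q\<in>I. 2 * ((v' p * D p a) * (v' q * D q a)))"
    by (rule sum.cong[OF refl], rule sum.swap)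
  also have "\<dots> = (\<Sum>a\<in>S. \<Sum>p\<in>I. \<Sum>q\<in>I. 2 * ((v' p * D p a) * (v' q * D q a)))"
    by (rule sum.swap)
  also have "\<dots> = (\<Sum>a\<in>S. 2 * ((\<Sum>p\<in>I. v' p * D p a) * (\<Sum>q\<in>I. v' q * D q a)))"
    by (simp add: sum_distrib_left sum_distrib_right mult_ac)
  also have "\<dots> \<ge> 0"
    by (intro sum_nonneg) simp
  finally show ?thesis .
qed

theorem theorem5p7:
  fixes n m l :: nat and A :: "nat \<Rightarrow> nat \<Rightarrow> nat \<Rightarrow> real" and z :: "nat \<Rightarrow> real"
  assumes "l \<ge> 1"
  shows "(\<forall>p\<in>multi_idx n l.
            partial_deriv (lifted_obj n m A z l) (tensor_power z) p = 0)
       \<and> (\<forall>v :: nat list \<Rightarrow> real.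
            (\<Sum>p\<in>multi_idx n l. \<Sum>q\<in>multi_idx n l.
               v p * v q * hessian_entry (lifted_obj n m A z l) (tensor_power z) p q) \<ge> 0)"
proof -
  let ?T = "tensor_power z"
  let ?I = "multi_idx n l"
  let ?S = "multi_idx m l"
  define c where "c = (\<lambda>a i j. \<Prod>k<l. A (a ! k) (i ! k) (j ! k))"
  have F: "lifted_obj n m A z l = (\<lambda>w. \<Sum>a\<in>?S. (gfun (c a) ?I (\<lambda>i j. ?T i * ?T j) w)\<^sup>2)"
    by (rule ext) (simp add: lifted_obj_def gfun_def c_def)
  have G: "partial_deriv (lifted_obj n m A z l) ?T p = 0" for p
    unfolding F pd_formula by (simp add: gfun_zero)
  have H: "(\<Sum>p\<in>?I. \<Sum>q\<in>?I. v p * v q * hessian_entry (lifted_obj n m A z l) ?T p q) \<ge> 0"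
    for v :: "nat list \<Rightarrow> real"
    unfolding F hess_formula by (rule quad[where D="\<lambda>p a. Dfun (c a) ?I p ?T"])
  show ?thesis using G H by blast
qed

end
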